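(* Consider a u-MPS with core tensor $\mathcal{A}$ and boundary vectors $\alpha,\omega\in\mathbb{R}^D$ such that $\mathcal{Z}_*:=\sum_{s\in\Sigma^*}(\alpha^T\mathcal{A}(s)\omega)^2$ is finite and positive, and let $P_*(s)=(\alpha^T\mathcal{A}(s)\omega)^2/\mathcal{Z}_*$ be the induced probability distribution on $\Sigma^*$. Let $R$ be an unambiguous regex whose right transfer operator $\mathcal{E}^r_R$ converges, and suppose $P_*(R):=\sum_{s'\in\mathcal{L}(R)}P_*(s')>0$. Then $\mathrm{SAMPLE}(R,\alpha\alpha^T,\omega\omega^T)$ outputs a random string distributed according to the conditional distribution $P_*(s\mid s\in\mathcal{L}(R))$, i.e. with probability $P_*(s)/P_*(R)$ if $s\in\mathcal{L}(R)$ and $0$ otherwise.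
   Context: A u-MPS over a finite alphabet $\Sigma$ of size $d$ consists of a core tensor $\mathcal{A}$ of shape $(D,d,D)$, assigning to each $c\in\Sigma$ a matrix $\mathcal{A}(c)\in\mathbb{R}^{D\times D}$, and boundary vectors $\alpha,\omega\in\mathbb{R}^D$; for $s=s_1\cdots s_n$, $\mathcal{A}(s)=\mathcal{A}(s_1)\cdots\mathcal{A}(s_n)$, $\mathcal{A}(\varepsilon)=I$. Regex are syntax trees built from characters $c\in\Sigma$, concatenations $R_1R_2$, unions $R_1|R_2$, Kleene closures $S^*$; $\mathcal{L}(R)$ is the set of strings matching $R$. Match counts: $|s|_c=1$ if $s=c$, else $0$; $|s|_{R_1R_2}=\sum_{s_1s_2=s}|s_1|_{R_1}|s_2|_{R_2}$; $|s|_{R_1|R_2}=|s|_{R_1}+|s|_{R_2}$; $|s|_{S^*}=\sum_{n\ge0}\sum_{s_1\cdots s_n=s}\prod_i|s_i|_S$ (the $n=0$ term being $1$ iff $s=\varepsilon$). $R$ is unambiguous if $|s|_R\in\{0,1\}$ for all $s$ (so $\mathcal{L}(R)=\{s:|s|_R=1\}$). Generalized transfer operators: $\mathcal{E}^r_c(Q)=\mathcal{A}(c)Q\mathcal{A}(c)^T$, $\mathcal{E}^\ell_c(Q)=\mathcal{A}(c)^TQ\mathcal{A}(c)$; $\mathcal{E}^r_{R_1R_2}=\mathcal{E}^r_{R_1}\circ\mathcal{E}^r_{R_2}$, $\mathcal{E}^\ell_{R_1R_2}=\mathcal{E}^\ell_{R_2}\circ\mathcal{E}^\ell_{R_1}$;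 unions give sums; $\mathcal{E}^r_{S^*}=\sum_{n\ge0}(\mathcal{E}^r_S)^{\circ n}$, $\mathcal{E}^\ell_{S^*}=\sum_{n\ge0}(\mathcal{E}^\ell_S)^{\circ n}$. A literal string $s$ is treated as the concatenation of its characters, so $\mathcal{E}^\ell_s(Q)=\mathcal{A}(s)^TQ\mathcal{A}(s)$. $\mathcal{E}^r_R$ converges if all Kleene-closure series in its recursive definition converge. $\mathcal{Z}_R(Q_\ell,Q_r)=\mathrm{Tr}(Q_\ell\mathcal{E}^r_R(Q_r))$. The randomized procedure $\mathrm{SAMPLE}(R,Q_\ell,Q_r)$ is defined recursively: (i) if $R=c$, return $c$; (ii) if $R=R_1R_2$, let $s_1=\mathrm{SAMPLE}(R_1,Q_\ell,\mathcal{E}^r_{R_2}(Q_r))$, then $s_2=\mathrm{SAMPLE}(R_2,\mathcal{E}^\ell_{s_1}(Q_\ell),Q_r)$, return $s_1s_2$; (iii) if $R=R_1|R_2$, choose $i\in\{1,2\}$ with probability $\mathcal{Z}_{R_i}(Q_\ell,Q_r)/\mathcal{Z}_{R_1|R_2}(Q_\ell,Q_r)$ and return $\mathrm{SAMPLE}(R_i,Q_\ell,Q_r)$; (iv) if $R=S^*$, with probability $\mathrm{Tr}(Q_\ell Q_r)/\mathcal{Z}_{S^*}(Q_\ell,Q_r)$ return $\varepsilon$, otherwise return $\mathrm{SAMPLE}(SS^*,Q_\ell,Q_r)$. All random choices are independent, and normalization constants encountered are assumed positive. *)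

theory Defs
  imports "HOL-Probability.Probability"
begin

type_synonym 'd mat = "real^'d^'d"

datatype 'c regex = Chr 'c | Cat "'c regex" "'c regex" | Alt "'c regex" "'c regex" | Star "'c regex"

definition Aword :: "('c \<Rightarrow> 'd::finite mat) \<Rightarrow> 'c list \<Rightarrow> 'd mat" where
  "Aword A s = foldr (\<lambda>c M. A c ** M) s (mat 1)"

definition outer :: "real^'d \<Rightarrow> real^'d \<Rightarrow> 'd::finite mat" where
  "outer u v = (\<chi> i j. u $ i * v $ j)"

text \<open>Match counts |s|_R (possibly infinite, hence ennreal).\<close>
primrec mcount :: "'c regex \<Rightarrow> 'c list \<Rightarrow> ennreal" where
  "mcount (Chr c) s = (if s = [c] then 1 else 0)"
| "mcount (Cat R1 R2) s = (\<Sum>k\<le>length s. mcount R1 (take k s) * mcount R2 (drop k s))"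
| "mcount (Alt R1 R2) s = mcount R1 s + mcount R2 s"
| "mcount (Star S) s =
     (\<Sum>n. \<Sum>ps\<in>{ps. length ps = n \<and> concat ps = s}. prod_list (map (mcount S) ps))"

definition unambiguous :: "'c regex \<Rightarrow> bool" where
  "unambiguous R \<longleftrightarrow> (\<forall>s. mcount R s \<in> {0, 1})"

definition lang :: "'c regex \<Rightarrow> 'c list set" where
  "lang R = {s. mcount R s \<noteq> 0}"

primrec Er :: "('c \<Rightarrow> 'd::finite mat) \<Rightarrow> 'c regex \<Rightarrow> 'd mat \<Rightarrow> 'd mat" where
  "Er A (Chr c) Q = A c ** Q ** transpose (A c)"
| "Er A (Cat R1 R2) Q = Er A R1 (Er A R2 Q)"
| "Er A (Alt R1 R2) Q = Er A R1 Q + Er A R2 Q"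
| "Er A (Star S) Q = (\<Sum>n. (Er A S ^^ n) Q)"

primrec Er_conv :: "('c \<Rightarrow> 'd::finite mat) \<Rightarrow> 'c regex \<Rightarrow> bool" where
  "Er_conv A (Chr c) = True"
| "Er_conv A (Cat R1 R2) = (Er_conv A R1 \<and> Er_conv A R2)"
| "Er_conv A (Alt R1 R2) = (Er_conv A R1 \<and> Er_conv A R2)"
| "Er_conv A (Star S) = (Er_conv A S \<and> (\<forall>Q. summable (\<lambda>n. (Er A S ^^ n) Q)))"

definition El_word :: "('c \<Rightarrow> 'd::finite mat) \<Rightarrow> 'c list \<Rightarrow> 'd mat \<Rightarrow> 'd mat" where
  "El_word A s Q = transpose (Aword A s) ** Q ** Aword A s"

definition Zr :: "('c \<Rightarrow> 'd::finite mat) \<Rightarrow> 'c regex \<Rightarrow> 'd mat \<Rightarrow> 'd mat \<Rightarrow> real" where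
  "Zr A R Ql Qr = trace (Ql ** Er A R Qr)"

text \<open>The randomized procedure SAMPLE; its output distribution is the least-fixed-point
  (sub-probability) semantics of the recursive procedure.\<close>
partial_function (spmf) sample ::
  "('c \<Rightarrow> 'd::finite mat) \<Rightarrow> 'c regex \<Rightarrow> 'd mat \<Rightarrow> 'd mat \<Rightarrow> 'c list spmf" where
  "sample A R Ql Qr =
    (case R of
       Chr c \<Rightarrow> return_spmf [c]
     | Cat R1 R2 \<Rightarrow>
         bind_spmf (sample A R1 Ql (Er A R2 Qr)) (\<lambda>s1.
         bind_spmf (sample A R2 (El_word A s1 Ql) Qr) (\<lambda>s2.
         return_spmf (s1 @ s2)))
     | Alt R1 R2 \<Rightarrow>
         bind_spmf (spmf_of_pmf (bernoulli_pmf (Zr A R1 Ql Qr / Zr A (Alt R1 R2) Ql Qr))) (\<lambda>b.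
         if b then sample A R1 Ql Qr else sample A R2 Ql Qr)
     | Star S \<Rightarrow>
         bind_spmf (spmf_of_pmf (bernoulli_pmf (trace (Ql ** Qr) / Zr A (Star S) Ql Qr))) (\<lambda>b.
         if b then return_spmf [] else sample A (Cat S (Star S)) Ql Qr))"

definition amp :: "('c \<Rightarrow> 'd::finite mat) \<Rightarrow> real^'d \<Rightarrow> real^'d \<Rightarrow> 'c list \<Rightarrow> real" where
  "amp A \<alpha> \<omega> s = \<alpha> \<bullet> (Aword A s *v \<omega>)"

end

theory Submission
  imports Defs
begin

definition vv :: "('c \<Rightarrow> 'd::finite mat) \<Rightarrow> 'c list \<Rightarrow> real^'d \<Rightarrow> real^'d" where
  "vv A s u = transpose (Aword A s) *v u"
definition qf :: "'d::finite mat \<Rightarrow> real^'d \<Rightarrow> real" where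
  "qf M x = x \<bullet> (M *v x)"
definition psd :: "'d::finite mat \<Rightarrow> bool" where
  "psd M \<longleftrightarrow> (\<forall>x. 0 \<le> qf M x)"
definition ww :: "('c \<Rightarrow> 'd::finite mat) \<Rightarrow> real^'d \<Rightarrow> 'd mat \<Rightarrow> 'c list \<Rightarrow> real" where
  "ww A u Q s = qf Q (vv A s u)"

lemma Aword_Nil[simp]: "Aword A [] = mat 1" by (simp add: Aword_def)
lemma Aword_Cons: "Aword A (c # s) = A c ** Aword A s" by (simp add: Aword_def)
lemma Aword_append: "Aword A (s1 @ s2) = Aword A s1 ** Aword A s2"
  by (induction s1) (simp_all add: Aword_Cons matrix_mul_assoc)

lemma vv_Nil[simp]: "vv A [] u = u" by (simp add: vv_def)
lemma vv_append: "vv A (s1 @ s2) u = vv A s2 (vv A s1 u)"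
  by (simp add: vv_def Aword_append matrix_transpose_mul matrix_vector_mul_assoc del: transpose_matrix_vector)
lemma vv_single: "vv A [c] u = transpose (A c) *v u"
  by (simp add: vv_def Aword_Cons)

lemma qf_conj: "qf (M ** Q ** transpose M) x = qf Q (transpose M *v x)"
proof -
  have "x \<bullet> ((M ** Q ** transpose M) *v x) = x \<bullet> (M *v (Q *v (transpose M *v x)))"
    by (simp add: matrix_vector_mul_assoc matrix_mul_assoc del: transpose_matrix_vector)
  also have "\<dots> = (x v* M) \<bullet> (Q *v (transpose M *v x))"
    by (simp add: dot_lmul_matrix)
  finally show ?thesis by (simp add: qf_def)
qed

lemma qf_add: "qf (M + N) x = qf M x + qf N x"
  by (simp add: qf_def matrix_vector_mult_add_rdistrib inner_add_right)

lemma linear_qf: "linear (\<lambda>M. qf M x)"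
  by (rule linearI) (simp add: qf_add, simp add: qf_def scaleR_matrix_vector_assoc[symmetric])

lemma bl_qf: "bounded_linear (\<lambda>M. qf M x)"
  using linear_qf linear_conv_bounded_linear by blast

lemma trace_outer: "trace (outer u u ** M) = qf M u"
  apply (simp add: trace_def outer_def qf_def matrix_matrix_mult_def matrix_vector_mult_def inner_vec_def
      sum_distrib_left mult_ac)
  apply (subst sum.swap) apply (simp add: mult_ac)
  done

lemma El_outer: "El_word A s (outer u u) = outer (vv A s u) (vv A s u)"
  by (simp add: El_word_def vv_def outer_def vec_eq_iff matrix_matrix_mult_def matrix_vector_mult_def
      transpose_def sum_distrib_left sum_distrib_right mult_ac)

lemma qf_outer: "qf (outer a a) x = (a \<bullet> x)\<^sup>2"
  by (simp add: qf_def outer_def matrix_vector_mult_def inner_vec_def power2_eq_square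
      sum_distrib_left sum_distrib_right mult_ac)

lemma Er_Chr_fun: "Er A (Chr c) = (\<lambda>Q. A c ** Q ** transpose (A c))"
  by (rule ext) simp

lemma linear_sandwich: "linear (\<lambda>Q::'d::finite mat. M ** Q ** N)"
proof (rule linearI)
  fix Q1 Q2 :: "'d mat"
  show "M ** (Q1 + Q2) ** N = M ** Q1 ** N + M ** Q2 ** N"
    by (simp add: vec_eq_iff matrix_matrix_mult_def sum.distrib distrib_left distrib_right)
next
  fix r :: real and Q :: "'d mat"
  show "M ** (r *\<^sub>R Q) ** N = r *\<^sub>R (M ** Q ** N)"
    by (simp add: vec_eq_iff matrix_matrix_mult_def sum_distrib_left mult_ac scaleR_sum_right)
qed

lemma linear_funpow: "linear (f::'a::real_vector \<Rightarrow> 'a) \<Longrightarrow> linear (f ^^ n)"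
proof (induction n)
  case 0 then show ?case by (simp add: linear_iff funpow_0)
next
  case (Suc n) then show ?case using linear_compose[of "f ^^ n" f] by (simp add: o_def)
qed

lemma lin_Er: "Er_conv A R \<Longrightarrow> linear (Er A R)"
proof (induction R)
  case (Chr c) then show ?case by (simp add: Er_Chr_fun linear_sandwich)
next
  case (Cat R1 R2)
  have "Er A (Cat R1 R2) = Er A R1 \<circ> Er A R2" by (rule ext) simp
  then show ?case using Cat linear_compose[of "Er A R2" "Er A R1"] by (simp add: o_def)
next
  case (Alt R1 R2)
  have "Er A (Alt R1 R2) = (\<lambda>Q. Er A R1 Q + Er A R2 Q)" by (rule ext) simp
  then show ?case using Alt by (auto intro!: linearI simp: linear_add linear_scale)
next
  case (Star S)
  have L: "\<And>n. linear (Er A S ^^ n)" using Star by (simp add: linear_funpow)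
  have sm: "\<And>Q. summable (\<lambda>n. (Er A S ^^ n) Q)" using Star by simp
  have "Er A (Star S) = (\<lambda>Q. \<Sum>n. (Er A S ^^ n) Q)" by (rule ext) simp
  moreover have "linear (\<lambda>Q. \<Sum>n. (Er A S ^^ n) Q)"
  proof (rule linearI)
    fix b1 b2
    show "(\<Sum>n. (Er A S ^^ n) (b1 + b2)) = (\<Sum>n. (Er A S ^^ n) b1) + (\<Sum>n. (Er A S ^^ n) b2)"
      using suminf_add[OF sm sm] L by (simp add: linear_add)
  next
    fix r b
    show "(\<Sum>n. (Er A S ^^ n) (r *\<^sub>R b)) = r *\<^sub>R (\<Sum>n. (Er A S ^^ n) b)"
      using suminf_scaleR_right[OF sm, of r b] L by (simp add: linear_scale)
  qed
  ultimately show ?case by simp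
qed

lemma bl_Er: "Er_conv A R \<Longrightarrow> bounded_linear (Er A R)"
  using lin_Er linear_conv_bounded_linear by blast

lemma Er_Star_unfold:
  assumes "Er_conv A (Star S)"
  shows "Er A (Star S) Q = Q + Er A S (Er A (Star S) Q)"
proof -
  have sm: "summable (\<lambda>n. (Er A S ^^ n) Q)" using assms by simp
  have bl: "bounded_linear (Er A S)" using assms bl_Er[of A S] by simp
  have "Er A S (Er A (Star S) Q) = (\<Sum>n. Er A S ((Er A S ^^ n) Q))"
    using bounded_linear.suminf[OF bl sm] by simp
  also have "\<dots> = (\<Sum>n. (Er A S ^^ Suc n) Q)" by simp
  also have "\<dots> = Er A (Star S) Q - Q"
    using suminf_split_head[OF sm] by simp
  finally show ?thesis by simp
qed

lemma psd_add: "psd M \<Longrightarrow> psd N \<Longrightarrow> psd (M + N)"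
  by (simp add: psd_def qf_add)

lemma P_pres: "Er_conv A R \<Longrightarrow> psd Q \<Longrightarrow> psd (Er A R Q)"
proof (induction R arbitrary: Q)
  case (Chr c) then show ?case by (simp add: psd_def qf_conj)
next
  case (Cat R1 R2) then show ?case by simp
next
  case (Alt R1 R2) then show ?case by (simp add: psd_add)
next
  case (Star S)
  have P: "psd ((Er A S ^^ n) Q)" for n
    using Star by (induction n) auto
  have sm: "summable (\<lambda>n. (Er A S ^^ n) Q)" using Star by simp
  show ?case unfolding psd_def
  proof
    fix x
    have "qf (Er A (Star S) Q) x = (\<Sum>n. qf ((Er A S ^^ n) Q) x)"
      using bounded_linear.suminf[OF bl_qf sm] by simp
    also have "\<dots> \<ge> 0"
      using P bounded_linear.summable[OF bl_qf sm] by (auto intro!: suminf_nonneg simp: psd_def)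
    finally show "0 \<le> qf (Er A (Star S) Q) x" .
  qed
qed

lemma NNPT: "f x0 \<le> (\<integral>\<^sup>+ x. f x \<partial>count_space UNIV)"
proof -
  have "(\<integral>\<^sup>+ x. f x0 * indicator {x0} x \<partial>count_space UNIV) \<le> (\<integral>\<^sup>+ x. f x \<partial>count_space UNIV)"
    by (rule nn_integral_mono) (auto split: split_indicator)
  then show ?thesis by (simp add: nn_integral_cmult_indicator)
qed

lemma NNFIN: "finite F \<Longrightarrow> (\<Sum>x\<in>F. f x) \<le> (\<integral>\<^sup>+ x. f x \<partial>count_space UNIV)"
proof -
  assume F: "finite F"
  have "(\<Sum>x\<in>F. f x) = (\<integral>\<^sup>+ x. f x \<partial>count_space F)" using F by (simp add: nn_integral_count_space_finite)
  also have "\<dots> = (\<integral>\<^sup>+ x. f x * indicator F x \<partial>count_space UNIV)" by (simp add: nn_integral_count_space_indicator)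
  also have "\<dots> \<le> (\<integral>\<^sup>+ x. f x \<partial>count_space UNIV)"
    by (rule nn_integral_mono) (auto split: split_indicator)
  finally show ?thesis .
qed

lemma NNSINGLE: "(\<integral>\<^sup>+ s. (if s = a then c else 0) \<partial>count_space UNIV) = (c::ennreal)"
proof -
  have "(\<integral>\<^sup>+ s. (if s = a then c else 0) \<partial>count_space UNIV) = (\<integral>\<^sup>+ s. c * indicator {a} s \<partial>count_space UNIV)"
    by (rule nn_integral_cong) (simp split: split_indicator)
  then show ?thesis by (simp add: nn_integral_cmult_indicator)
qed

lemma take_inj: "inj_on (\<lambda>k. take k s) {..length s}"
proof (rule inj_onI)
  fix x y assume "x \<in> {..length s}" "y \<in> {..length s}" "take x s = take y s"
  then have "length (take x s) = length (take y s)" by simp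
  then show "x = y" using \<open>x \<in> _\<close> \<open>y \<in> _\<close> by (simp add: min_def split: if_splits)
qed

lemma CATSUM:
  fixes g :: "'a::countable list \<Rightarrow> 'a list \<Rightarrow> ennreal"
  shows "(\<integral>\<^sup>+ s. (\<Sum>k\<le>length s. g (take k s) (drop k s)) \<partial>count_space UNIV)
       = (\<integral>\<^sup>+ s1. (\<integral>\<^sup>+ s2. g s1 s2 \<partial>count_space UNIV) \<partial>count_space UNIV)"
proof -
  define H where "H s1 s = g s1 (drop (length s1) s) * indicator {s. take (length s1) s = s1} s" for s1 s
  have inner: "(\<integral>\<^sup>+ s2. g s1 s2 \<partial>count_space UNIV) = (\<integral>\<^sup>+ s. H s1 s \<partial>count_space UNIV)" for s1
  proof -
    have bij: "bij_betw (append s1) UNIV (range (append s1))" by (simp add: bij_betw_def inj_on_def)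
    have "(\<integral>\<^sup>+ s2. g s1 s2 \<partial>count_space UNIV) = (\<integral>\<^sup>+ s2. g s1 (drop (length s1) (s1 @ s2)) \<partial>count_space UNIV)"
      by simp
    also have "\<dots> = (\<integral>\<^sup>+ s. g s1 (drop (length s1) s) \<partial>count_space (range (append s1)))"
      by (rule nn_integral_bij_count_space[OF bij, of "\<lambda>s. g s1 (drop (length s1) s)"])
    also have "\<dots> = (\<integral>\<^sup>+ s. g s1 (drop (length s1) s) * indicator (range (append s1)) s \<partial>count_space UNIV)"
      by (simp add: nn_integral_count_space_indicator)
    also have "range (append s1) = {s. take (length s1) s = s1}"
    proof (intro set_eqI iffI)
      fix s assume "s \<in> {s. take (length s1) s = s1}"
      then have "s = s1 @ drop (length s1) s" by (metis append_take_drop_id mem_Collect_eq)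
      then show "s \<in> range (append s1)" by (rule range_eqI)
    qed auto
    finally show ?thesis by (simp add: H_def)
  qed
  have swap: "(\<integral>\<^sup>+ s1. (\<integral>\<^sup>+ s. H s1 s \<partial>count_space UNIV) \<partial>count_space UNIV)
      = (\<integral>\<^sup>+ s. (\<integral>\<^sup>+ s1. H s1 s \<partial>count_space UNIV) \<partial>count_space UNIV)"
    by (rule nn_integral_count_space_nn_integral[symmetric]) (rule countableI_type, rule borel_measurable_count_space)
  have pt: "(\<integral>\<^sup>+ s1. H s1 s \<partial>count_space UNIV) = (\<Sum>k\<le>length s. g (take k s) (drop k s))" for s
  proof -
    have "(\<integral>\<^sup>+ s1. H s1 s \<partial>count_space UNIV) = (\<Sum>s1\<in>(\<lambda>k. take k s) ` {..length s}. H s1 s)"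
    proof (rule nn_integral_count_space')
      show "finite ((\<lambda>k. take k s) ` {..length s})" by simp
      fix s1 assume nin: "s1 \<notin> (\<lambda>k. take k s) ` {..length s}"
      show "H s1 s = 0"
      proof (cases "take (length s1) s = s1")
        case True
        then have "length (take (length s1) s) = length s1" by simp
        then have "length s1 \<le> length s" by (simp add: min_def split: if_splits)
        then have "s1 \<in> (\<lambda>k. take k s) ` {..length s}" using True by (intro image_eqI[where x="length s1"]) auto
        with nin show ?thesis by simp
      next
        case False then show ?thesis by (simp add: H_def)
      qed
    qed simp
    also have "\<dots> = (\<Sum>k\<le>length s. H (take k s) s)"
      by (subst sum.reindex[OF take_inj]) simp
    also have "\<dots> = (\<Sum>k\<le>length s. g (take k s) (drop k s))"
      by (rule sum.cong) (auto simp: H_def min_def)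
    finally show ?thesis .
  qed
  show ?thesis using swap by (simp add: inner pt)
qed

definition tset :: "nat \<Rightarrow> 'c list \<Rightarrow> 'c list list set" where
  "tset n s = {ps. length ps = n \<and> concat ps = s}"

definition astar :: "('c list \<Rightarrow> ennreal) \<Rightarrow> nat \<Rightarrow> 'c list \<Rightarrow> ennreal" where
  "astar m n s = (\<Sum>ps\<in>tset n s. prod_list (map m ps))"

lemma mcount_Star_astar: "mcount (Star S) s = (\<Sum>n. astar (mcount S) n s)"
  by (simp add: astar_def tset_def)

lemma len_in_concat: "p \<in> set ps \<Longrightarrow> length p \<le> length (concat ps)"
proof -
  assume "p \<in> set ps"
  then obtain a b where "ps = a @ p # b" by (meson split_list)
  then show ?thesis by simp
qed

lemma finite_tset: "finite (tset n s)"
proof -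
  define B where "B = {xs. set xs \<subseteq> set s \<and> length xs \<le> length s}"
  have fB: "finite B" unfolding B_def by (rule finite_lists_length_le) simp
  have "tset n s \<subseteq> {ps. set ps \<subseteq> B \<and> length ps = n}"
  proof
    fix ps assume "ps \<in> tset n s"
    then have ps: "length ps = n" "concat ps = s" by (auto simp: tset_def)
    have "set ps \<subseteq> B"
    proof
      fix p assume p: "p \<in> set ps"
      have "set p \<subseteq> set s" using p ps(2) by auto
      moreover have "length p \<le> length s" using len_in_concat[OF p] ps(2) by simp
      ultimately show "p \<in> B" by (simp add: B_def)
    qed
    then show "ps \<in> {ps. set ps \<subseteq> B \<and> length ps = n}" using ps by simp
  qed
  moreover have "finite {ps. set ps \<subseteq> B \<and> length ps = n}" by (rule finite_lists_length_eq[OF fB])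
  ultimately show ?thesis by (rule finite_subset)
qed

lemma astar0: "astar m 0 s = (if s = [] then 1 else 0)"
proof -
  have "tset 0 s = (if s = [] then {[]} else {})" by (auto simp: tset_def)
  then show ?thesis by (simp add: astar_def)
qed

lemma tset_Suc:
  "tset (Suc n) s = (\<lambda>(k, ps). take k s # ps) ` (SIGMA k:{..length s}. tset n (drop k s))"
proof (intro set_eqI iffI)
  fix ps assume "ps \<in> tset (Suc n) s"
  then obtain p ps' where ps: "ps = p # ps'" "length ps' = n" "p @ concat ps' = s"
    by (auto simp: tset_def length_Suc_conv)
  have k: "length p \<le> length s" using ps(3) by auto
  have "take (length p) s = p" using ps(3) by auto
  moreover have "drop (length p) s = concat ps'" using ps(3) by auto
  ultimately have "(length p, ps') \<in> (SIGMA k:{..length s}. tset n (drop k s))" "ps = (\<lambda>(k, ps). take k s # ps) (length p, ps')"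
    using k ps by (auto simp: tset_def)
  then show "ps \<in> (\<lambda>(k, ps). take k s # ps) ` (SIGMA k:{..length s}. tset n (drop k s))"
    by (rule rev_image_eqI)
next
  fix ps assume "ps \<in> (\<lambda>(k, ps). take k s # ps) ` (SIGMA k:{..length s}. tset n (drop k s))"
  then obtain k ps' where "ps = take k s # ps'" "length ps' = n" "concat ps' = drop k s"
    by (auto simp: tset_def)
  then show "ps \<in> tset (Suc n) s" by (simp add: tset_def)
qed

lemma inj_tset_Suc: "inj_on (\<lambda>(k, ps). take k s # ps) (SIGMA k:{..length s}. tset n (drop k s))"
proof (rule inj_onI)
  fix x y
  assume x: "x \<in> (SIGMA k:{..length s}. tset n (drop k s))" and y: "y \<in> (SIGMA k:{..length s}. tset n (drop k s))"
    and eq: "(\<lambda>(k, ps). take k s # ps) x = (\<lambda>(k, ps). take k s # ps) y"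
  obtain k ps where xk: "x = (k, ps)" by (cases x)
  obtain k' ps' where yk: "y = (k', ps')" by (cases y)
  have k: "k \<in> {..length s}" "k' \<in> {..length s}" using x y xk yk by auto
  have "take k s = take k' s" "ps = ps'" using eq xk yk by simp_all
  moreover have "k = k'" using inj_onD[OF take_inj \<open>take k s = take k' s\<close>] k by simp
  ultimately show "x = y" using xk yk by simp
qed

lemma ARec: "astar m (Suc n) s = (\<Sum>k\<le>length s. m (take k s) * astar m n (drop k s))"
proof -
  have "astar m (Suc n) s = (\<Sum>x\<in>(SIGMA k:{..length s}. tset n (drop k s)). prod_list (map m ((\<lambda>(k, ps). take k s # ps) x)))"
    unfolding astar_def tset_Suc by (subst sum.reindex[OF inj_tset_Suc]) (simp add: o_def)
  also have "\<dots> = (\<Sum>k\<le>length s. \<Sum>ps\<in>tset n (drop k s). m (take k s) * prod_list (map m ps))"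
  proof -
    have "(\<Sum>x\<in>(SIGMA k:{..length s}. tset n (drop k s)). prod_list (map m ((\<lambda>(k, ps). take k s # ps) x)))
       = (\<Sum>(k,ps)\<in>(SIGMA k:{..length s}. tset n (drop k s)). m (take k s) * prod_list (map m ps))"
      by (rule sum.cong) auto
    also have "\<dots> = (\<Sum>k\<le>length s. \<Sum>ps\<in>tset n (drop k s). m (take k s) * prod_list (map m ps))"
      by (rule sum.Sigma[symmetric]) (auto simp: finite_tset)
    finally show ?thesis .
  qed
  also have "\<dots> = (\<Sum>k\<le>length s. m (take k s) * astar m n (drop k s))"
    by (simp add: astar_def sum_distrib_left)
  finally show ?thesis .
qed

lemma ENN_le_suminf: "(f n :: ennreal) \<le> suminf f"
  using sum_le_suminf[of f "{n}"] by simp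

lemma ENN_suminf_head: "suminf (f :: nat \<Rightarrow> ennreal) = f 0 + (\<Sum>n. f (Suc n))"
proof -
  have "(\<lambda>n. f (Suc n)) sums (\<Sum>n. f (Suc n))" by (rule summable_sums) simp
  then have "f sums ((\<Sum>n. f (Suc n)) + f 0)" by (rule sums_Suc)
  then show ?thesis by (simp add: sums_iff add.commute)
qed

lemma mcount_Star_unfold:
  "mcount (Star S) s = (if s = [] then 1 else 0) + mcount (Cat S (Star S)) s"
proof -
  have "mcount (Star S) s = astar (mcount S) 0 s + (\<Sum>n. astar (mcount S) (Suc n) s)"
    unfolding mcount_Star_astar by (rule ENN_suminf_head)
  also have "(\<Sum>n. astar (mcount S) (Suc n) s)
      = (\<Sum>n. \<Sum>k\<le>length s. mcount S (take k s) * astar (mcount S) n (drop k s))"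
    by (simp add: ARec)
  also have "\<dots> = (\<Sum>k\<le>length s. \<Sum>n. mcount S (take k s) * astar (mcount S) n (drop k s))"
    by (rule suminf_sum) simp
  also have "\<dots> = mcount (Cat S (Star S)) s"
    by (simp add: mcount_Star_astar[symmetric])
  finally show ?thesis by (simp add: astar0)
qed

declare mcount.simps(2)[simp del] mcount.simps(4)[simp del]

lemma PL1: "(\<forall>x\<in>set xs. (1::ennreal) \<le> x) \<Longrightarrow> 1 \<le> prod_list xs"
proof (induction xs)
  case Nil then show ?case by simp
next
  case (Cons a xs)
  then have "1 * 1 \<le> a * prod_list xs" by (intro mult_mono) auto
  then show ?case by simp
qed

lemma PL0: "prod_list (xs :: ennreal list) \<noteq> 0 \<Longrightarrow> x \<in> set xs \<Longrightarrow> x \<noteq> 0"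
  by (induction xs) auto

lemma one_le_mult_ennreal: "(1::ennreal) \<le> a \<Longrightarrow> 1 \<le> b \<Longrightarrow> 1 \<le> a * b"
proof -
  assume "1 \<le> a" "1 \<le> b"
  then have "1 * 1 \<le> a * b" by (intro mult_mono) auto
  then show ?thesis by simp
qed

lemma SUMNZ: "sum f A \<noteq> 0 \<Longrightarrow> \<exists>x\<in>A. f x \<noteq> 0"
proof (rule ccontr)
  assume a: "sum f A \<noteq> 0" "\<not> (\<exists>x\<in>A. f x \<noteq> 0)"
  then have "\<forall>x\<in>A. f x = 0" by blast
  then have "sum f A = 0" by (rule sum.neutral)
  with a show False by simp
qed

lemma SUMINFNZ: "suminf f \<noteq> (0::ennreal) \<Longrightarrow> \<exists>n. f n \<noteq> 0"
proof (rule ccontr)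
  assume "suminf f \<noteq> 0" "\<not> (\<exists>n. f n \<noteq> 0)"
  then have "f = (\<lambda>_. 0)" by auto
  with \<open>suminf f \<noteq> 0\<close> show False by simp
qed

lemma ONE: "mcount R s \<noteq> 0 \<Longrightarrow> 1 \<le> mcount R s"
proof (induction R arbitrary: s)
  case (Chr c) then show ?case by (simp split: if_splits)
next
  case (Cat R1 R2)
  let ?t = "\<lambda>k. mcount R1 (take k s) * mcount R2 (drop k s)"
  have nz: "(\<Sum>k\<le>length s. ?t k) \<noteq> 0" using Cat.prems by (simp add: mcount.simps(2))
  obtain k where k: "k \<in> {..length s}" "?t k \<noteq> 0"
    using SUMNZ[OF nz] by blast
  then have "1 \<le> ?t k" using Cat.IH by (intro one_le_mult_ennreal) auto
  also have "?t k \<le> (\<Sum>k\<le>length s. ?t k)" by (rule member_le_sum) (use k in auto)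
  finally show ?case by (simp add: mcount.simps(2))
next
  case (Alt R1 R2)
  show ?case
  proof (cases "mcount R1 s = 0")
    case True
    then show ?thesis using Alt by simp
  next
    case False
    then have "1 \<le> mcount R1 s" using Alt.IH by simp
    then show ?thesis by (simp add: add_increasing2)
  qed
next
  case (Star S)
  have nz: "(\<Sum>n. astar (mcount S) n s) \<noteq> 0" using Star.prems unfolding mcount_Star_astar by assumption
  obtain n where n: "astar (mcount S) n s \<noteq> 0" using SUMINFNZ[OF nz] by blast
  then obtain ps where ps: "ps \<in> tset n s" "prod_list (map (mcount S) ps) \<noteq> 0"
    using SUMNZ[OF n[unfolded astar_def]] by blast
  have "\<forall>x\<in>set (map (mcount S) ps). 1 \<le> x"
    using PL0[OF ps(2)] Star.IH by auto
  then have "1 \<le> prod_list (map (mcount S) ps)" by (rule PL1)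
  also have "\<dots> \<le> astar (mcount S) n s"
    unfolding astar_def by (rule member_le_sum) (use ps finite_tset in auto)
  also have "\<dots> \<le> (\<Sum>n. astar (mcount S) n s)" by (rule ENN_le_suminf)
  finally show ?case by (simp only: mcount_Star_astar)
qed

lemma CT: "mcount R1 s1 * mcount R2 s2 \<le> mcount (Cat R1 R2) (s1 @ s2)"
proof -
  let ?s = "s1 @ s2"
  have "mcount R1 s1 * mcount R2 s2 = mcount R1 (take (length s1) ?s) * mcount R2 (drop (length s1) ?s)"
    by simp
  also have "\<dots> \<le> (\<Sum>k\<le>length ?s. mcount R1 (take k ?s) * mcount R2 (drop k ?s))"
    by (rule member_le_sum) auto
  finally show ?thesis by (simp only: mcount.simps(2))
qed

lemma Star_Nil_ge1: "1 \<le> mcount (Star S) []"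
  using mcount_Star_unfold[of S "[]"] by (simp add: add_increasing2)

lemma NE: "\<exists>s. mcount R s \<noteq> 0"
proof (induction R)
  case (Chr c) then show ?case by (intro exI[of _ "[c]"]) simp
next
  case (Cat R1 R2)
  then obtain s1 s2 where "mcount R1 s1 \<noteq> 0" "mcount R2 s2 \<noteq> 0" by blast
  then have "mcount R1 s1 * mcount R2 s2 \<noteq> 0" by simp
  then have "mcount (Cat R1 R2) (s1 @ s2) \<noteq> 0" using CT[of R1 s1 R2 s2] by (auto simp del: mult_eq_0_iff)
  then show ?case by blast
next
  case (Alt R1 R2)
  then obtain s1 where "mcount R1 s1 \<noteq> 0" by blast
  then show ?case by (intro exI[of _ s1]) simp
next
  case (Star S)
  have "mcount (Star S) [] \<noteq> 0" using Star_Nil_ge1[of S] by auto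
  then show ?case by blast
qed

lemma unamb_le1: "unambiguous R \<Longrightarrow> mcount R s \<le> 1"
proof -
  assume "unambiguous R"
  then have "mcount R s \<in> {0, 1}" unfolding unambiguous_def by blast
  then show ?thesis by (elim insertE) simp_all
qed

lemma unambI: "(\<And>s. mcount R s \<le> 1) \<Longrightarrow> unambiguous R"
  unfolding unambiguous_def
proof
  fix s assume le: "\<And>s. mcount R s \<le> 1"
  show "mcount R s \<in> {0, 1}"
  proof (cases "mcount R s = 0")
    case False
    then have "1 \<le> mcount R s" by (rule ONE)
    then have "mcount R s = 1" using le[of s] by (rule antisym[rotated])
    then show ?thesis by simp
  qed simp
qed

lemma one_add_eq: "(1::ennreal) = 1 + x \<Longrightarrow> x = 0"
proof (cases x)
  case (real r)
  assume h: "1 = 1 + x"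
  have "ennreal 1 = ennreal (1 + r)" using h real by (simp add: ennreal_plus)
  then have "1 = 1 + r" using real by (subst (asm) ennreal_inj) auto
  then show ?thesis using real by simp
next
  case top
  assume "1 = 1 + x" then show ?thesis using top by simp
qed

lemma UA: "unambiguous (Alt R1 R2) \<Longrightarrow> unambiguous R1 \<and> unambiguous R2"
proof -
  assume u: "unambiguous (Alt R1 R2)"
  have "mcount R1 s \<le> 1" for s
  proof -
    have "mcount R1 s \<le> mcount (Alt R1 R2) s" by simp
    then show ?thesis using unamb_le1[OF u, of s] by (rule order_trans)
  qed
  moreover have "mcount R2 s \<le> 1" for s
  proof -
    have "mcount R2 s \<le> mcount (Alt R1 R2) s" by simp
    then show ?thesis using unamb_le1[OF u, of s] by (rule order_trans)
  qed
  ultimately show ?thesis by (auto intro: unambI)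
qed

lemma UC: "unambiguous (Cat R1 R2) \<Longrightarrow> unambiguous R1 \<and> unambiguous R2"
proof -
  assume u: "unambiguous (Cat R1 R2)"
  obtain s1 where s1: "mcount R1 s1 \<noteq> 0" using NE by blast
  obtain s2 where s2: "mcount R2 s2 \<noteq> 0" using NE by blast
  have "mcount R1 s \<le> 1" for s
  proof -
    have "mcount R1 s = mcount R1 s * 1" by simp
    also have "\<dots> \<le> mcount R1 s * mcount R2 s2" using ONE[OF s2] by (intro mult_left_mono) auto
    also have "\<dots> \<le> 1" by (rule order_trans[OF CT unamb_le1[OF u]])
    finally show ?thesis .
  qed
  moreover have "mcount R2 s \<le> 1" for s
  proof -
    have "mcount R2 s = 1 * mcount R2 s" by simp
    also have "\<dots> \<le> mcount R1 s1 * mcount R2 s" using ONE[OF s1] by (intro mult_right_mono) auto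
    also have "\<dots> \<le> 1" by (rule order_trans[OF CT unamb_le1[OF u]])
    finally show ?thesis .
  qed
  ultimately show ?thesis by (auto intro: unambI)
qed

lemma US: "unambiguous (Star S) \<Longrightarrow> unambiguous S \<and> mcount S [] = 0 \<and> unambiguous (Cat S (Star S))"
proof -
  assume u: "unambiguous (Star S)"
  have catle: "mcount (Cat S (Star S)) s \<le> mcount (Star S) s" for s
    unfolding mcount_Star_unfold[of S s] by (rule add_increasing) simp_all
  have c1: "mcount (Cat S (Star S)) s \<le> 1" for s by (rule order_trans[OF catle unamb_le1[OF u]])
  have "mcount S s \<le> 1" for s
  proof -
    have "mcount S s = mcount S s * 1" by simp
    also have "\<dots> \<le> mcount S s * mcount (Star S) []" using Star_Nil_ge1 by (intro mult_left_mono) auto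
    also have "\<dots> \<le> mcount (Cat S (Star S)) (s @ [])" by (rule CT)
    finally have "mcount S s \<le> mcount (Cat S (Star S)) s" by simp
    then show ?thesis using c1[of s] by (rule order_trans)
  qed
  moreover have "mcount S [] = 0"
  proof -
    have one: "mcount (Star S) [] = 1"
      by (rule antisym[OF unamb_le1[OF u] Star_Nil_ge1])
    have "mcount (Cat S (Star S)) [] = mcount S []" by (simp add: one mcount.simps(2))
    then have "1 = 1 + mcount S []" using mcount_Star_unfold[of S "[]"] one by simp
    then show ?thesis by (rule one_add_eq)
  qed
  ultimately show ?thesis using c1 by (auto intro: unambI)
qed

lemma ww_append: "ww A u Q (s1 @ s2) = ww A (vv A s1 u) Q s2"
  by (simp add: ww_def vv_append)

lemma ww_Nil: "ww A u Q [] = qf Q u" by (simp add: ww_def)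

lemma ww_nonneg: "psd Q \<Longrightarrow> 0 \<le> ww A u Q s" by (simp add: ww_def psd_def)

lemma ww_take_drop: "ww A u Q s = ww A (vv A (take k s) u) Q (drop k s)"
  using ww_append[of A u Q "take k s" "drop k s"] by simp

lemma cat_expand:
  fixes m1 m2 :: "'c::countable list \<Rightarrow> ennreal"
  shows "(\<integral>\<^sup>+ s. (\<Sum>k\<le>length s. m1 (take k s) * m2 (drop k s)) * ennreal (ww A u Q s) \<partial>count_space UNIV)
    = (\<integral>\<^sup>+ s1. m1 s1 * (\<integral>\<^sup>+ s2. m2 s2 * ennreal (ww A (vv A s1 u) Q s2) \<partial>count_space UNIV) \<partial>count_space UNIV)"
proof -
  have "(\<integral>\<^sup>+ s. (\<Sum>k\<le>length s. m1 (take k s) * m2 (drop k s)) * ennreal (ww A u Q s) \<partial>count_space UNIV)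
      = (\<integral>\<^sup>+ s. (\<Sum>k\<le>length s. (\<lambda>s1 s2. m1 s1 * (m2 s2 * ennreal (ww A (vv A s1 u) Q s2))) (take k s) (drop k s)) \<partial>count_space UNIV)"
    by (rule nn_integral_cong) (simp add: sum_distrib_right mult.assoc ww_take_drop[symmetric])
  also have "\<dots> = (\<integral>\<^sup>+ s1. (\<integral>\<^sup>+ s2. m1 s1 * (m2 s2 * ennreal (ww A (vv A s1 u) Q s2)) \<partial>count_space UNIV) \<partial>count_space UNIV)"
    by (rule CATSUM)
  also have "\<dots> = (\<integral>\<^sup>+ s1. m1 s1 * (\<integral>\<^sup>+ s2. m2 s2 * ennreal (ww A (vv A s1 u) Q s2) \<partial>count_space UNIV) \<partial>count_space UNIV)"
    by (rule nn_integral_cong) (rule nn_integral_cmult, rule borel_measurable_count_space)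
  finally show ?thesis .
qed

lemma SUM:
  fixes A :: "'c::countable \<Rightarrow> 'd::finite mat"
  shows "Er_conv A R \<Longrightarrow> psd Q \<Longrightarrow>
   (\<integral>\<^sup>+ s. mcount R s * ennreal (ww A u Q s) \<partial>count_space UNIV) = ennreal (qf (Er A R Q) u)"
proof (induction R arbitrary: u Q)
  case (Chr c)
  have "(\<integral>\<^sup>+ s. mcount (Chr c) s * ennreal (ww A u Q s) \<partial>count_space UNIV)
      = (\<integral>\<^sup>+ s. (if s = [c] then ennreal (ww A u Q [c]) else 0) \<partial>count_space UNIV)"
    by (rule nn_integral_cong) simp
  also have "\<dots> = ennreal (ww A u Q [c])" by (rule NNSINGLE)
  also have "ww A u Q [c] = qf (Er A (Chr c) Q) u"
    by (simp add: ww_def vv_single qf_conj del: transpose_matrix_vector)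
  finally show ?case .
next
  case (Alt R1 R2)
  have n1: "0 \<le> qf (Er A R1 Q) u" using P_pres[of A R1 Q] Alt.prems by (simp add: psd_def)
  have n2: "0 \<le> qf (Er A R2 Q) u" using P_pres[of A R2 Q] Alt.prems by (simp add: psd_def)
  have "(\<integral>\<^sup>+ s. mcount (Alt R1 R2) s * ennreal (ww A u Q s) \<partial>count_space UNIV)
      = (\<integral>\<^sup>+ s. mcount R1 s * ennreal (ww A u Q s) + mcount R2 s * ennreal (ww A u Q s) \<partial>count_space UNIV)"
    by (rule nn_integral_cong) (simp add: distrib_right)
  also have "\<dots> = (\<integral>\<^sup>+ s. mcount R1 s * ennreal (ww A u Q s) \<partial>count_space UNIV)
      + (\<integral>\<^sup>+ s. mcount R2 s * ennreal (ww A u Q s) \<partial>count_space UNIV)"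
    by (rule nn_integral_add) (rule borel_measurable_count_space)+
  also have "\<dots> = ennreal (qf (Er A R1 Q) u) + ennreal (qf (Er A R2 Q) u)"
    using Alt by simp
  also have "\<dots> = ennreal (qf (Er A (Alt R1 R2) Q) u)"
    using n1 n2 by (simp add: qf_add ennreal_plus)
  finally show ?case .
next
  case (Cat R1 R2)
  have P2: "psd (Er A R2 Q)" using P_pres[of A R2 Q] Cat.prems by simp
  have "(\<integral>\<^sup>+ s. mcount (Cat R1 R2) s * ennreal (ww A u Q s) \<partial>count_space UNIV)
      = (\<integral>\<^sup>+ s1. mcount R1 s1 * (\<integral>\<^sup>+ s2. mcount R2 s2 * ennreal (ww A (vv A s1 u) Q s2) \<partial>count_space UNIV) \<partial>count_space UNIV)"
    unfolding mcount.simps(2) by (rule cat_expand)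
  also have "\<dots> = (\<integral>\<^sup>+ s1. mcount R1 s1 * ennreal (ww A u (Er A R2 Q) s1) \<partial>count_space UNIV)"
    using Cat by (simp add: ww_def)
  also have "\<dots> = ennreal (qf (Er A (Cat R1 R2) Q) u)"
    using Cat P2 by simp
  finally show ?case .
next
  case (Star S)
  let ?E = "Er A S"
  let ?m = "mcount S"
  have PS: "psd ((?E ^^ n) Q)" for n
    using Star by (induction n) (auto intro: P_pres)
  have AN: "(\<integral>\<^sup>+ s. astar ?m n s * ennreal (ww A u Q s) \<partial>count_space UNIV) = ennreal (qf ((?E ^^ n) Q) u)" for n u
  proof (induction n arbitrary: u)
    case 0
    have "(\<integral>\<^sup>+ s. astar ?m 0 s * ennreal (ww A u Q s) \<partial>count_space UNIV)
        = (\<integral>\<^sup>+ s. (if s = ([]::'c list) then ennreal (ww A u Q []) else 0) \<partial>count_space UNIV)"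
      by (rule nn_integral_cong) (simp add: astar0)
    also have "\<dots> = ennreal (ww A u Q [])" by (rule NNSINGLE)
    finally show ?case by (simp add: ww_Nil)
  next
    case (Suc n)
    have "(\<integral>\<^sup>+ s. astar ?m (Suc n) s * ennreal (ww A u Q s) \<partial>count_space UNIV)
        = (\<integral>\<^sup>+ s1. ?m s1 * (\<integral>\<^sup>+ s2. astar ?m n s2 * ennreal (ww A (vv A s1 u) Q s2) \<partial>count_space UNIV) \<partial>count_space UNIV)"
      unfolding ARec by (rule cat_expand)
    also have "\<dots> = (\<integral>\<^sup>+ s1. ?m s1 * ennreal (ww A u ((?E ^^ n) Q) s1) \<partial>count_space UNIV)"
      using Suc by (simp add: ww_def)
    also have "\<dots> = ennreal (qf (?E ((?E ^^ n) Q)) u)"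
      using Star.IH PS Star.prems by simp
    finally show ?case by simp
  qed
  have sm: "summable (\<lambda>n. (?E ^^ n) Q)" using Star.prems by simp
  have smq: "summable (\<lambda>n. qf ((?E ^^ n) Q) u)" by (rule bounded_linear.summable[OF bl_qf sm])
  have nn: "0 \<le> qf ((?E ^^ n) Q) u" for n using PS by (simp add: psd_def)
  have "(\<integral>\<^sup>+ s. mcount (Star S) s * ennreal (ww A u Q s) \<partial>count_space UNIV)
      = (\<integral>\<^sup>+ s. (\<Sum>n. astar ?m n s * ennreal (ww A u Q s)) \<partial>count_space UNIV)"
    by (rule nn_integral_cong) (simp add: mcount_Star_astar)
  also have "\<dots> = (\<Sum>n. \<integral>\<^sup>+ s. astar ?m n s * ennreal (ww A u Q s) \<partial>count_space UNIV)"
    by (rule nn_integral_suminf) (rule borel_measurable_count_space)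
  also have "\<dots> = (\<Sum>n. ennreal (qf ((?E ^^ n) Q) u))" by (simp add: AN)
  also have "\<dots> = ennreal (\<Sum>n. qf ((?E ^^ n) Q) u)" by (rule suminf_ennreal2[OF nn smq])
  also have "(\<Sum>n. qf ((?E ^^ n) Q) u) = qf (Er A (Star S) Q) u"
    using bounded_linear.suminf[OF bl_qf sm] by simp
  finally show ?case .
qed

lemma SCHR: "spmf (sample A (Chr c) Ql Qr) s = (if s = [c] then 1 else 0)"
  by (subst sample.simps) simp

lemma SALT:
  assumes "0 \<le> Zr A R1 Ql Qr / Zr A (Alt R1 R2) Ql Qr" "Zr A R1 Ql Qr / Zr A (Alt R1 R2) Ql Qr \<le> 1"
  shows "spmf (sample A (Alt R1 R2) Ql Qr) s =
     Zr A R1 Ql Qr / Zr A (Alt R1 R2) Ql Qr * spmf (sample A R1 Ql Qr) s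
     + (1 - Zr A R1 Ql Qr / Zr A (Alt R1 R2) Ql Qr) * spmf (sample A R2 Ql Qr) s"
  apply (subst sample.simps)
  using assms by (simp add: pmf_bind)

lemma SSTAR:
  assumes "0 \<le> trace (Ql ** Qr) / Zr A (Star S) Ql Qr" "trace (Ql ** Qr) / Zr A (Star S) Ql Qr \<le> 1"
  shows "spmf (sample A (Star S) Ql Qr) s =
     trace (Ql ** Qr) / Zr A (Star S) Ql Qr * (if s = [] then 1 else 0)
     + (1 - trace (Ql ** Qr) / Zr A (Star S) Ql Qr) * spmf (sample A (Cat S (Star S)) Ql Qr) s"
  apply (subst sample.simps)
  using assms by (simp add: pmf_bind)

lemma SCAT:
  fixes A :: "'c::countable \<Rightarrow> 'd::finite mat"
  shows "(\<Sum>k\<le>length s. ennreal (spmf (sample A R1 Ql (Er A R2 Qr)) (take k s))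
            * ennreal (spmf (sample A R2 (El_word A (take k s) Ql) Qr) (drop k s)))
     \<le> ennreal (spmf (sample A (Cat R1 R2) Ql Qr) s)"
proof -
  define p1 where "p1 = sample A R1 Ql (Er A R2 Qr)"
  define f where "f = (\<lambda>s1. bind_spmf (sample A R2 (El_word A s1 Ql) Qr) (\<lambda>s2. return_spmf (s1 @ s2)))"
  have eq: "sample A (Cat R1 R2) Ql Qr = bind_spmf p1 f"
    by (subst sample.simps) (simp add: p1_def f_def)
  define G where "G y = ennreal (spmf p1 y) * ennreal (spmf (f y) s)" for y
  have inner: "ennreal (spmf (sample A R2 (El_word A (take k s) Ql) Qr) (drop k s)) \<le> ennreal (spmf (f (take k s)) s)" for k
  proof -
    have "ennreal (spmf (f (take k s)) s) = (\<integral>\<^sup>+ s2. ennreal (spmf (sample A R2 (El_word A (take k s) Ql) Qr) s2) * ennreal (spmf (return_spmf (take k s @ s2)) s) \<partial>count_space UNIV)"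
      unfolding f_def ennreal_spmf_bind nn_integral_measure_spmf by simp
    also have "\<dots> \<ge> ennreal (spmf (sample A R2 (El_word A (take k s) Ql) Qr) (drop k s)) * ennreal (spmf (return_spmf (take k s @ drop k s)) s)"
      by (rule NNPT)
    finally show ?thesis by simp
  qed
  have "(\<Sum>k\<le>length s. ennreal (spmf p1 (take k s)) * ennreal (spmf (sample A R2 (El_word A (take k s) Ql) Qr) (drop k s)))
      \<le> (\<Sum>k\<le>length s. G (take k s))"
    unfolding G_def by (intro sum_mono mult_left_mono inner) simp
  also have "\<dots> = (\<Sum>y\<in>(\<lambda>k. take k s) ` {..length s}. G y)"
    by (subst sum.reindex[OF take_inj]) simp
  also have "\<dots> \<le> (\<integral>\<^sup>+ y. G y \<partial>count_space UNIV)" by (rule NNFIN) simp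
  also have "\<dots> = ennreal (spmf (sample A (Cat R1 R2) Ql Qr) s)"
    unfolding eq ennreal_spmf_bind nn_integral_measure_spmf G_def by simp
  finally show ?thesis by (simp add: p1_def)
qed

lemma Zr_outer: "Zr A R (outer u u) Q = qf (Er A R Q) u"
  by (simp add: Zr_def trace_outer)

lemma TB:
  fixes A :: "'c::countable \<Rightarrow> 'd::finite mat"
  shows "Er_conv A R \<Longrightarrow> psd Q \<Longrightarrow> mcount R s * ennreal (ww A u Q s) \<le> ennreal (qf (Er A R Q) u)"
  using NNPT[of "\<lambda>s. mcount R s * ennreal (ww A u Q s)" s] SUM[of A R Q u] by simp

lemma qf_Er_nonneg: "Er_conv A R \<Longrightarrow> psd Q \<Longrightarrow> 0 \<le> qf (Er A R Q) u"
  using P_pres[of A R Q] by (simp add: psd_def)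

lemma CATLB:
  fixes A :: "'c::countable \<Rightarrow> 'd::finite mat"
  assumes c1: "Er_conv A R1" and c2: "Er_conv A R2" and pQ: "psd Q"
    and Zpos: "0 < qf (Er A R1 (Er A R2 Q)) u"
    and H1: "\<And>k u' Q'. k \<le> length s \<Longrightarrow> mcount R1 (take k s) \<noteq> 0 \<Longrightarrow> psd Q' \<Longrightarrow> 0 < qf (Er A R1 Q') u' \<Longrightarrow>
       mcount R1 (take k s) * ennreal (ww A u' Q' (take k s))
       \<le> ennreal (spmf (sample A R1 (outer u' u') Q') (take k s)) * ennreal (qf (Er A R1 Q') u')"
    and H2: "\<And>k u' Q'. k \<le> length s \<Longrightarrow> mcount R1 (take k s) \<noteq> 0 \<Longrightarrow> psd Q' \<Longrightarrow> 0 < qf (Er A R2 Q') u' \<Longrightarrow>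
       mcount R2 (drop k s) * ennreal (ww A u' Q' (drop k s))
       \<le> ennreal (spmf (sample A R2 (outer u' u') Q') (drop k s)) * ennreal (qf (Er A R2 Q') u')"
  shows "mcount (Cat R1 R2) s * ennreal (ww A u Q s)
     \<le> ennreal (spmf (sample A (Cat R1 R2) (outer u u) Q) s) * ennreal (qf (Er A (Cat R1 R2) Q) u)"
proof -
  define Z where "Z = qf (Er A R1 (Er A R2 Q)) u"
  define sp1 where "sp1 k = ennreal (spmf (sample A R1 (outer u u) (Er A R2 Q)) (take k s))" for k
  define sp2 where "sp2 k = ennreal (spmf (sample A R2 (El_word A (take k s) (outer u u)) Q) (drop k s))" for k
  have P2: "psd (Er A R2 Q)" using P_pres[OF c2 pQ] .
  have trm: "mcount R1 (take k s) * mcount R2 (drop k s) * ennreal (ww A u Q s) \<le> sp1 k * sp2 k * ennreal Z"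
    if k: "k \<le> length s" for k
  proof (cases "mcount R1 (take k s) = 0")
    case True then show ?thesis by simp
  next
    case m1: False
    define u1 where "u1 = vv A (take k s) u"
    define Z2 where "Z2 = qf (Er A R2 Q) u1"
    have wsplit: "ww A u Q s = ww A u1 Q (drop k s)" unfolding u1_def by (rule ww_take_drop)
    have Z2w: "Z2 = ww A u (Er A R2 Q) (take k s)" by (simp add: Z2_def u1_def ww_def)
    have sp2': "sp2 k = ennreal (spmf (sample A R2 (outer u1 u1) Q) (drop k s))"
      by (simp add: sp2_def El_outer u1_def)
    show ?thesis
    proof (cases "0 < Z2")
      case True
      have a: "mcount R2 (drop k s) * ennreal (ww A u1 Q (drop k s)) \<le> sp2 k * ennreal Z2"
        unfolding sp2' Z2_def using H2[OF k m1 pQ] True by (simp add: Z2_def)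
      have b: "mcount R1 (take k s) * ennreal Z2 \<le> sp1 k * ennreal Z"
        unfolding Z2w sp1_def Z_def using H1[OF k m1 P2] Zpos by (simp add: Z_def)
      have "mcount R1 (take k s) * mcount R2 (drop k s) * ennreal (ww A u Q s)
          = mcount R1 (take k s) * (mcount R2 (drop k s) * ennreal (ww A u1 Q (drop k s)))"
        by (simp add: wsplit mult.assoc)
      also have "\<dots> \<le> mcount R1 (take k s) * (sp2 k * ennreal Z2)" by (rule mult_left_mono[OF a]) simp
      also have "\<dots> = sp2 k * (mcount R1 (take k s) * ennreal Z2)" by (simp add: mult_ac)
      also have "\<dots> \<le> sp2 k * (sp1 k * ennreal Z)" by (rule mult_left_mono[OF b]) simp
      finally show ?thesis by (simp add: mult_ac)
    next
      case False
      then have "Z2 \<le> 0" by simp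
      have "mcount R2 (drop k s) * ennreal (ww A u1 Q (drop k s)) \<le> ennreal Z2"
        unfolding Z2_def by (rule TB[OF c2 pQ])
      also have "\<dots> = 0" using \<open>Z2 \<le> 0\<close> by (rule ennreal_neg)
      finally have "mcount R2 (drop k s) * ennreal (ww A u1 Q (drop k s)) = 0" by simp
      then have eq0: "mcount R1 (take k s) * mcount R2 (drop k s) * ennreal (ww A u Q s) = 0"
        by (simp add: wsplit mult.assoc)
      show ?thesis unfolding eq0 by (rule zero_le)
    qed
  qed
  have "mcount (Cat R1 R2) s * ennreal (ww A u Q s)
      = (\<Sum>k\<le>length s. mcount R1 (take k s) * mcount R2 (drop k s) * ennreal (ww A u Q s))"
    by (simp add: mcount.simps(2) sum_distrib_right)
  also have "\<dots> \<le> (\<Sum>k\<le>length s. sp1 k * sp2 k * ennreal Z)"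
    by (rule sum_mono) (rule trm, simp)
  also have "\<dots> = (\<Sum>k\<le>length s. sp1 k * sp2 k) * ennreal Z" by (simp add: sum_distrib_right)
  also have "\<dots> \<le> ennreal (spmf (sample A (Cat R1 R2) (outer u u) Q) s) * ennreal Z"
    by (rule mult_right_mono) (simp_all add: sp1_def sp2_def SCAT)
  finally show ?thesis by (simp add: Z_def)
qed

lemma mix_lemma:
  fixes x p a b Z Z1 Z2 :: real
  assumes h1: "x = p * a + (1 - p) * b" and h2: "p * Z = Z1" and h3: "(1 - p) * Z = Z2"
  shows "x * Z = Z1 * a + Z2 * b"
proof -
  have "x * Z = a * (p * Z) + b * ((1 - p) * Z)" unfolding h1 by (simp add: algebra_simps)
  also have "\<dots> = a * Z1 + b * Z2" by (simp only: h2 h3)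
  finally show ?thesis by (simp add: mult.commute)
qed

lemma LB:
  fixes A :: "'c::countable \<Rightarrow> 'd::finite mat"
  shows "length s \<le> N \<Longrightarrow> unambiguous R \<Longrightarrow> Er_conv A R \<Longrightarrow> psd Q \<Longrightarrow> 0 < qf (Er A R Q) u \<Longrightarrow>
    mcount R s * ennreal (ww A u Q s) \<le> ennreal (spmf (sample A R (outer u u) Q) s) * ennreal (qf (Er A R Q) u)"
proof (induction N arbitrary: R u Q s rule: less_induct)
  case (less N)
  show ?case using less.prems
  proof (induction R arbitrary: u Q s)
    case (Chr c)
    show ?case
    proof (cases "s = [c]")
      case True
      have "ww A u Q [c] = qf (Er A (Chr c) Q) u"
        by (simp add: ww_def vv_single qf_conj del: transpose_matrix_vector)
      then show ?thesis using True by (simp add: SCHR)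
    next
      case False then show ?thesis by (simp add: SCHR)
    qed
  next
    case (Alt R1 R2)
    have u1: "unambiguous R1" and u2: "unambiguous R2" using UA[OF Alt.prems(2)] by auto
    have c1: "Er_conv A R1" and c2: "Er_conv A R2" using Alt.prems(3) by auto
    define Z1 where "Z1 = qf (Er A R1 Q) u"
    define Z2 where "Z2 = qf (Er A R2 Q) u"
    define sp1 where "sp1 = spmf (sample A R1 (outer u u) Q) s"
    define sp2 where "sp2 = spmf (sample A R2 (outer u u) Q) s"
    define sp where "sp = spmf (sample A (Alt R1 R2) (outer u u) Q) s"
    have n1: "0 \<le> Z1" unfolding Z1_def by (rule qf_Er_nonneg[OF c1 Alt.prems(4)])
    have n2: "0 \<le> Z2" unfolding Z2_def by (rule qf_Er_nonneg[OF c2 Alt.prems(4)])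
    have ZA: "qf (Er A (Alt R1 R2) Q) u = Z1 + Z2" by (simp add: qf_add Z1_def Z2_def)
    have ZA': "qf (Er A R1 Q + Er A R2 Q) u = Z1 + Z2" by (simp add: qf_add Z1_def Z2_def)
    have Zpos: "0 < Z1 + Z2" using Alt.prems(5) ZA by simp
    have p0: "0 \<le> Z1 / (Z1 + Z2)" using n1 n2 by simp
    have p1: "Z1 / (Z1 + Z2) \<le> 1" using n1 n2 Zpos by simp
    have spe: "sp = Z1 / (Z1 + Z2) * sp1 + (1 - Z1 / (Z1 + Z2)) * sp2"
      using SALT[of A R1 "outer u u" Q R2 s] p0 p1
      by (simp add: Zr_outer ZA' sp_def sp1_def sp2_def) (simp add: Z1_def)
    have e1: "Z1 / (Z1 + Z2) * (Z1 + Z2) = Z1" using Zpos by simp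
    have e2: "(1 - Z1 / (Z1 + Z2)) * (Z1 + Z2) = Z2" using e1 by (simp add: left_diff_distrib)
    have spZ: "sp * (Z1 + Z2) = sp1 * Z1 + sp2 * Z2"
      using mix_lemma[OF spe e1 e2] by (simp add: mult.commute)
    have b1: "mcount R1 s * ennreal (ww A u Q s) \<le> ennreal (sp1 * Z1)"
    proof (cases "0 < Z1")
      case True
      then show ?thesis using Alt.IH(1)[OF Alt.prems(1) u1 c1 Alt.prems(4)]
        by (simp add: Z1_def sp1_def ennreal_mult)
    next
      case False
      then have "Z1 = 0" using n1 by simp
      then show ?thesis using TB[OF c1 Alt.prems(4), of s u] by (simp add: Z1_def)
    qed
    have b2: "mcount R2 s * ennreal (ww A u Q s) \<le> ennreal (sp2 * Z2)"
    proof (cases "0 < Z2")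
      case True
      then show ?thesis using Alt.IH(2)[OF Alt.prems(1) u2 c2 Alt.prems(4)]
        by (simp add: Z2_def sp2_def ennreal_mult)
    next
      case False
      then have "Z2 = 0" using n2 by simp
      then show ?thesis using TB[OF c2 Alt.prems(4), of s u] by (simp add: Z2_def)
    qed
    have "mcount (Alt R1 R2) s * ennreal (ww A u Q s)
        = mcount R1 s * ennreal (ww A u Q s) + mcount R2 s * ennreal (ww A u Q s)"
      by (simp add: distrib_right)
    also have "\<dots> \<le> ennreal (sp1 * Z1) + ennreal (sp2 * Z2)" by (rule add_mono[OF b1 b2])
    also have "\<dots> = ennreal (sp * (Z1 + Z2))"
      using n1 n2 by (simp add: spZ sp1_def sp2_def ennreal_plus)
    also have "\<dots> = ennreal sp * ennreal (qf (Er A (Alt R1 R2) Q) u)"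
      unfolding ZA by (rule ennreal_mult) (simp_all add: sp_def n1 n2)
    finally show ?case by (simp add: sp_def)
  next
    case (Cat R1 R2)
    have u1: "unambiguous R1" and u2: "unambiguous R2" using UC[OF Cat.prems(2)] by auto
    have c1: "Er_conv A R1" and c2: "Er_conv A R2" using Cat.prems(3) by auto
    show ?case
    proof (rule CATLB[OF c1 c2 Cat.prems(4)])
      show "0 < qf (Er A R1 (Er A R2 Q)) u" using Cat.prems(5) by simp
    next
      fix k u' Q' assume k: "k \<le> length s" and "psd Q'" "0 < qf (Er A R1 Q') u'"
      then show "mcount R1 (take k s) * ennreal (ww A u' Q' (take k s))
       \<le> ennreal (spmf (sample A R1 (outer u' u') Q') (take k s)) * ennreal (qf (Er A R1 Q') u')"
        using Cat.IH(1)[of "take k s" Q' u'] Cat.prems(1) u1 c1 by simp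
    next
      fix k u' Q' assume k: "k \<le> length s" and "psd Q'" "0 < qf (Er A R2 Q') u'"
      then show "mcount R2 (drop k s) * ennreal (ww A u' Q' (drop k s))
       \<le> ennreal (spmf (sample A R2 (outer u' u') Q') (drop k s)) * ennreal (qf (Er A R2 Q') u')"
        using Cat.IH(2)[of "drop k s" Q' u'] Cat.prems(1) u2 c2 by simp
    qed
  next
    case (Star S)
    have uS: "unambiguous S" and mS0: "mcount S [] = 0" and uC: "unambiguous (Cat S (Star S))"
      using US[OF Star.prems(2)] by auto
    have cS: "Er_conv A S" using Star.prems(3) by simp
    have cC: "Er_conv A (Cat S (Star S))" using Star.prems(3) by simp
    have pQ: "psd Q" by (rule Star.prems(4))
    define q0 where "q0 = qf Q u"
    define Zc where "Zc = qf (Er A (Cat S (Star S)) Q) u"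
    define Zs where "Zs = qf (Er A (Star S) Q) u"
    define spc where "spc = spmf (sample A (Cat S (Star S)) (outer u u) Q) s"
    define sps where "sps = spmf (sample A (Star S) (outer u u) Q) s"
    have nq0: "0 \<le> q0" using pQ by (simp add: psd_def q0_def)
    have nZc: "0 \<le> Zc" unfolding Zc_def by (rule qf_Er_nonneg[OF cC pQ])
    have ZsE: "Zs = q0 + Zc"
      unfolding Zs_def q0_def Zc_def
      by (subst Er_Star_unfold[OF Star.prems(3)]) (simp add: qf_add)
    have Zspos: "0 < Zs" using Star.prems(5) by (simp add: Zs_def)
    have p0: "0 \<le> q0 / Zs" using nq0 Zspos by simp
    have p1: "q0 / Zs \<le> 1" using nq0 nZc ZsE Zspos by (simp add: divide_le_eq_1)
    have spe: "sps = q0 / Zs * (if s = [] then 1 else 0) + (1 - q0 / Zs) * spc"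
      using SSTAR[of "outer u u" Q A S s] p0 p1
      by (simp add: Zr_outer trace_outer q0_def Zs_def sps_def spc_def)
    have e1: "q0 / Zs * Zs = q0" using Zspos by simp
    have e2: "(1 - q0 / Zs) * Zs = Zc" using e1 ZsE by (simp add: left_diff_distrib)
    have spZ: "sps * Zs = q0 * (if s = [] then 1 else 0) + spc * Zc"
      using mix_lemma[OF spe e1 e2] by (simp add: mult.commute)
    have bc: "mcount (Cat S (Star S)) s * ennreal (ww A u Q s) \<le> ennreal spc * ennreal Zc"
    proof (cases "0 < Zc")
      case False
      then have "Zc = 0" using nZc by simp
      then show ?thesis using TB[OF cC pQ, of s u] by (simp add: Zc_def)
    next
      case True
      show ?thesis unfolding spc_def Zc_def
      proof (rule CATLB[OF cS Star.prems(3) pQ])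
        show "0 < qf (Er A S (Er A (Star S) Q)) u" using True by (simp add: Zc_def)
      next
        fix k u' Q' assume k: "k \<le> length s" and "psd Q'" "0 < qf (Er A S Q') u'"
        then show "mcount S (take k s) * ennreal (ww A u' Q' (take k s))
         \<le> ennreal (spmf (sample A S (outer u' u') Q') (take k s)) * ennreal (qf (Er A S Q') u')"
          using Star.IH[of "take k s" Q' u'] Star.prems(1) uS cS by simp
      next
        fix k u' Q' assume k: "k \<le> length s" and m: "mcount S (take k s) \<noteq> 0"
          and pQ': "psd Q'" and Z': "0 < qf (Er A (Star S) Q') u'"
        have "k \<noteq> 0" using m mS0 by (cases k) auto
        then have lt: "length (drop k s) < N" using k Star.prems(1) by simp
        show "mcount (Star S) (drop k s) * ennreal (ww A u' Q' (drop k s))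
         \<le> ennreal (spmf (sample A (Star S) (outer u' u') Q') (drop k s)) * ennreal (qf (Er A (Star S) Q') u')"
          by (rule less.IH[OF lt order_refl Star.prems(2) Star.prems(3) pQ' Z'])
      qed
    qed
    have w0: "(if s = [] then 1 else 0) * ennreal (ww A u Q s) = ennreal (q0 * (if s = [] then 1 else 0))"
      by (simp add: ww_Nil q0_def)
    have "mcount (Star S) s * ennreal (ww A u Q s)
        = (if s = [] then 1 else 0) * ennreal (ww A u Q s) + mcount (Cat S (Star S)) s * ennreal (ww A u Q s)"
      by (simp add: mcount_Star_unfold distrib_right)
    also have "\<dots> \<le> ennreal (q0 * (if s = [] then 1 else 0)) + ennreal spc * ennreal Zc"
      unfolding w0 by (rule add_left_mono[OF bc])
    also have "\<dots> = ennreal (sps * Zs)"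
      using nq0 nZc by (simp add: spZ spc_def ennreal_plus ennreal_mult)
    also have "\<dots> = ennreal sps * ennreal Zs"
      using Zspos by (simp add: ennreal_mult sps_def)
    finally show ?case by (simp add: sps_def Zs_def)
  qed
qed

lemma ww_amp: "ww A \<alpha> (outer \<omega> \<omega>) s = (amp A \<alpha> \<omega> s)\<^sup>2"
proof -
  have "\<omega> \<bullet> vv A s \<alpha> = (\<alpha> v* Aword A s) \<bullet> \<omega>"
    by (simp add: vv_def inner_commute)
  also have "\<dots> = \<alpha> \<bullet> (Aword A s *v \<omega>)" by (rule dot_lmul_matrix)
  finally have "\<omega> \<bullet> vv A s \<alpha> = \<alpha> \<bullet> (Aword A s *v \<omega>)" .
  then show ?thesis by (simp add: ww_def qf_outer amp_def)
qed

lemma psd_outer: "psd (outer w w)" by (simp add: psd_def qf_outer)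

lemma real_infsum_nn:
  fixes f :: "'a \<Rightarrow> real"
  assumes sm: "f summable_on UNIV" and nn: "\<And>x. 0 \<le> f x"
  shows "(\<integral>\<^sup>+ x. ennreal (f x) * indicator B x \<partial>count_space UNIV) = ennreal (infsum f B)"
proof -
  have smB: "f summable_on B" by (rule summable_on_subset_banach[OF sm]) simp
  have n: "(\<lambda>x. norm (f x)) summable_on B" using smB nn by simp
  have abs: "Infinite_Set_Sum.abs_summable_on f B" using abs_summable_equivalent[of f B] n by simp
  have "(\<integral>\<^sup>+ x. ennreal (f x) * indicator B x \<partial>count_space UNIV) = (\<integral>\<^sup>+ x. ennreal (f x) \<partial>count_space B)"
    by (simp add: nn_integral_count_space_indicator)
  also have "\<dots> = ennreal (infsetsum f B)" by (rule nn_integral_conv_infsetsum[OF abs nn])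
  also have "infsetsum f B = infsum f B" by (rule infsetsum_infsum[OF abs])
  finally show ?thesis .
qed

theorem theorem1:
  fixes A :: "'c::finite \<Rightarrow> real^'d^'d" and \<alpha> \<omega> :: "real^'d::finite" and R :: "'c regex"
  defines "Zstar \<equiv> infsum (\<lambda>s. (amp A \<alpha> \<omega> s)\<^sup>2) UNIV"
  defines "Pstar \<equiv> (\<lambda>s. (amp A \<alpha> \<omega> s)\<^sup>2 / Zstar)"
  defines "PR \<equiv> infsum Pstar (lang R)"
  assumes "(\<lambda>s. (amp A \<alpha> \<omega> s)\<^sup>2) summable_on UNIV"
    and "Zstar > 0"
    and "unambiguous R"
    and "Er_conv A R"
    and "PR > 0"
  shows "\<forall>s. spmf (sample A R (outer \<alpha> \<alpha>) (outer \<omega> \<omega>)) s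
               = (if s \<in> lang R then Pstar s / PR else 0)"
proof -
  define f where "f s = (amp A \<alpha> \<omega> s)\<^sup>2" for s
  define Q where "Q = outer \<omega> \<omega>"
  define Z where "Z = qf (Er A R Q) \<alpha>"
  define ZR where "ZR = infsum f (lang R)"
  define p where "p = sample A R (outer \<alpha> \<alpha>) Q"
  note sm = assms(4) and Zst = assms(5) and un = assms(6) and cv = assms(7) and PRp = assms(8)
  have fnn: "0 \<le> f s" for s by (simp add: f_def)
  have pQ: "psd Q" by (simp add: Q_def psd_outer)
  have wf: "ww A \<alpha> Q s = f s" for s by (simp add: Q_def f_def ww_amp)
  have mc: "mcount R s * ennreal (f s) = ennreal (f s) * indicator (lang R) s" for s
  proof -
    have "mcount R s \<in> {0, 1}" using un by (simp add: unambiguous_def)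
    then show ?thesis by (auto simp: lang_def split: split_indicator)
  qed
  have Zeq: "ennreal Z = ennreal ZR"
  proof -
    have "ennreal Z = (\<integral>\<^sup>+ s. mcount R s * ennreal (ww A \<alpha> Q s) \<partial>count_space UNIV)"
      unfolding Z_def by (rule SUM[OF cv pQ, symmetric])
    also have "\<dots> = (\<integral>\<^sup>+ s. ennreal (f s) * indicator (lang R) s \<partial>count_space UNIV)"
      by (simp add: wf mc)
    also have "\<dots> = ennreal ZR" unfolding ZR_def
      by (rule real_infsum_nn) (use sm fnn in \<open>simp_all add: f_def\<close>)
    finally show ?thesis .
  qed
  have Znn: "0 \<le> Z" unfolding Z_def by (rule qf_Er_nonneg[OF cv pQ])
  have ZRnn: "0 \<le> ZR" unfolding ZR_def by (rule infsum_nonneg) (simp add: fnn)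
  have ZZ: "Z = ZR" using Zeq Znn ZRnn by simp
  have PReq: "PR = ZR / Zstar"
  proof -
    have "PR = infsum (\<lambda>s. f s * inverse Zstar) (lang R)"
      by (simp add: PR_def Pstar_def f_def divide_inverse)
    also have "\<dots> = ZR * inverse Zstar"
      unfolding ZR_def by (rule infsum_cmult_left) (rule summable_on_subset_banach[OF sm[folded f_def[abs_def]]], simp)
    finally show ?thesis by (simp add: divide_inverse)
  qed
  have ZRpos: "0 < ZR" using PRp Zst PReq by (simp add: zero_less_divide_iff)
  have Zpos: "0 < Z" using ZZ ZRpos by simp
  define t where "t s = (if s \<in> lang R then f s / Z else 0)" for s
  have tnn: "0 \<le> t s" for s using fnn Znn by (simp add: t_def)
  have lb: "t s \<le> spmf p s" for s
  proof (cases "s \<in> lang R")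
    case True
    then have m1: "mcount R s = 1" using un by (auto simp: unambiguous_def lang_def)
    have "mcount R s * ennreal (ww A \<alpha> Q s) \<le> ennreal (spmf p s) * ennreal Z"
      unfolding p_def Z_def by (rule LB[OF order_refl un cv pQ Zpos[unfolded Z_def]])
    then have "ennreal (f s) \<le> ennreal (spmf p s * Z)" using m1 Znn by (simp add: wf ennreal_mult)
    then have "f s \<le> spmf p s * Z" using Znn by (simp add: ennreal_le_iff)
    then show ?thesis using True Zpos by (simp add: t_def pos_divide_le_eq)
  next
    case False then show ?thesis by (simp add: t_def)
  qed
  have tsum: "(\<integral>\<^sup>+ s. ennreal (t s) \<partial>count_space UNIV) = 1"
  proof -
    have "(\<integral>\<^sup>+ s. ennreal (t s) \<partial>count_space UNIV)
        = (\<integral>\<^sup>+ s. ennreal (f s) * indicator (lang R) s * ennreal (inverse Z) \<partial>count_space UNIV)"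
      by (rule nn_integral_cong) (use Znn fnn in \<open>auto simp: t_def divide_inverse ennreal_mult split: split_indicator\<close>)
    also have "\<dots> = (\<integral>\<^sup>+ s. ennreal (f s) * indicator (lang R) s \<partial>count_space UNIV) * ennreal (inverse Z)"
      by (rule nn_integral_multc) (rule borel_measurable_count_space)
    also have "(\<integral>\<^sup>+ s. ennreal (f s) * indicator (lang R) s \<partial>count_space UNIV) = ennreal Z"
      unfolding ZZ ZR_def by (rule real_infsum_nn) (use sm fnn in \<open>simp_all add: f_def\<close>)
    also have "ennreal Z * ennreal (inverse Z) = 1"
      using Zpos by (simp add: ennreal_mult[symmetric])
    finally show ?thesis .
  qed
  have eq: "spmf p s = t s" for s
  proof (rule ccontr)
    assume ne: "spmf p s \<noteq> t s"
    then have dpos: "0 < spmf p s - t s" using lb[of s] by simp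
    have split: "ennreal (spmf p x) = ennreal (t x) + ennreal (spmf p x - t x)" for x
      using lb[of x] tnn[of x] by (simp add: ennreal_plus[symmetric])
    have "(\<integral>\<^sup>+ x. ennreal (spmf p x) \<partial>count_space UNIV)
        = (\<integral>\<^sup>+ x. ennreal (t x) \<partial>count_space UNIV) + (\<integral>\<^sup>+ x. ennreal (spmf p x - t x) \<partial>count_space UNIV)"
      unfolding split by (rule nn_integral_add) (rule borel_measurable_count_space)+
    also have "\<dots> \<ge> 1 + ennreal (spmf p s - t s)"
      unfolding tsum by (rule add_left_mono) (rule NNPT)
    finally have ge: "1 + ennreal (spmf p s - t s) \<le> ennreal (weight_spmf p)"
      by (simp add: weight_spmf_eq_nn_integral_spmf)
    have "ennreal (weight_spmf p) \<le> 1" using weight_spmf_le_1[of p] by simp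
    with ge have "1 + ennreal (spmf p s - t s) \<le> 1" by (rule order_trans)
    then have "ennreal (1 + (spmf p s - t s)) \<le> ennreal 1" using dpos by (simp add: ennreal_plus)
    then have "1 + (spmf p s - t s) \<le> 1" by (simp add: ennreal_le_iff)
    with dpos show False by simp
  qed
  show ?thesis
  proof
    fix s
    have "Pstar s / PR = f s / ZR" using Zst ZRpos by (simp add: Pstar_def PReq f_def)
    then show "spmf (sample A R (outer \<alpha> \<alpha>) (outer \<omega> \<omega>)) s = (if s \<in> lang R then Pstar s / PR else 0)"
      using eq[of s] by (simp add: p_def Q_def t_def ZZ)
  qed
qed

end
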